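(* Let $n$ be even, let $\mathbf{X}=\{X_{rj}:r,j=1,\dots,n\}$ be the switch variables of the standard lightbulb process with $X_j=(\sum_{r=1}^nX_{rj})\bmod 2$, and for $i\in\{1,\dots,n\}$ construct $\mathbf{X}^i$ as follows: let $J^i$ have conditional distribution, given $\mathbf{X}$, uniform on $\{j:X_{n/2,j}=1-X_{n/2,i}\}$; if $X_i=1$ set $\mathbf{X}^i=\mathbf{X}$; otherwise let $\mathbf{X}^i$ equal $\mathbf{X}$ except that the values of $X_{n/2,i}$ and $X_{n/2,J^i}$ are interchanged. Then for all $i=1,\dots,n$, $\mathcal{L}(\mathbf{X}^i)=\mathcal{L}(\mathbf{X}\mid X_i=1)$.
   Context: Standard lightbulb process: $n$ bulbs, all initially off, $n$ stages; at stage $r=1,\dots,n$ a uniformly random subset of exactly $r$ bulbs is toggled, independently across stages. The switch variable $X_{rj}\in\{0,1\}$ is $1$ iff bulb $j$ is toggled at stage $r$; thus $P(X_{rj}=e_{rj}\ \forall r,j)=\prod_{r=1}^n\binom{n}{r}^{-1}$ if $\sum_je_{rj}=r$ for all $r$, and $0$ otherwise. $\mathcal{L}(\cdot)$ denotes the law (distribution). *)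

theory Defs
  imports "HOL-Probability.Probability"
begin

text \<open>A realisation of the switch variables is encoded as a function
  S :: nat \<Rightarrow> nat set, where S r is the set of bulbs toggled at stage r,
  i.e. X_{rj} = 1 iff j \<in> S r.  Bulbs and stages are indexed by {1..n}.\<close>

definition lightbulb_switches :: "nat \<Rightarrow> (nat \<Rightarrow> nat set) pmf" where
  "lightbulb_switches n =
     Pi_pmf {1..n} {} (\<lambda>r. pmf_of_set {A. A \<subseteq> {1..n} \<and> card A = r})"

definition bulb_on :: "nat \<Rightarrow> (nat \<Rightarrow> nat set) \<Rightarrow> nat \<Rightarrow> bool" where
  "bulb_on n S j \<longleftrightarrow> odd (card {r \<in> {1..n}. j \<in> S r})"

definition interchange :: "nat \<Rightarrow> nat \<Rightarrow> nat \<Rightarrow> (nat \<Rightarrow> nat set) \<Rightarrow> (nat \<Rightarrow> nat set)" where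
  "interchange m i j S =
     S(m := {k. if k = i then j \<in> S m else if k = j then i \<in> S m else k \<in> S m})"

text \<open>The coupled configuration X^i (jointly constructed with X; we return its law).\<close>
definition switched_config :: "nat \<Rightarrow> nat \<Rightarrow> (nat \<Rightarrow> nat set) \<Rightarrow> (nat \<Rightarrow> nat set) pmf" where
  "switched_config n i S =
     (if bulb_on n S i then return_pmf S
      else do {
        J \<leftarrow> pmf_of_set {j \<in> {1..n}. (j \<in> S (n div 2)) \<noteq> (i \<in> S (n div 2))};
        return_pmf (interchange (n div 2) i J S)
      })"

end

theory Submission
  imports Defs
begin

definition Om :: "nat \<Rightarrow> (nat \<Rightarrow> nat set) set" where
  "Om n = PiE_dflt {1..n} {} (\<lambda>r. {A. A \<subseteq> {1..n} \<and> card A = r})"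

definition Dset :: "nat \<Rightarrow> nat \<Rightarrow> (nat \<Rightarrow> nat set) \<Rightarrow> nat set" where
  "Dset n i S = {j\<in>{1..n}. (j \<in> S (n div 2)) \<noteq> (i \<in> S (n div 2))}"

lemma Om_mem: "S \<in> Om n \<longleftrightarrow> (\<forall>r. (r \<in> {1..n} \<longrightarrow> S r \<subseteq> {1..n} \<and> card (S r) = r) \<and> (r \<notin> {1..n} \<longrightarrow> S r = {}))"
  by (auto simp: Om_def PiE_dflt_def)

lemma finite_Om: "finite (Om n)"
  unfolding Om_def by (rule finite_PiE_dflt) auto

lemma Om_ne: "Om n \<noteq> {}"
proof -
  have "\<And>r. r \<in> {1..n} \<Longrightarrow> {A. A \<subseteq> {1..n} \<and> card A = r} \<noteq> {}"
  proof -
    fix r assume "r \<in> {1..n}"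
    then have "{1..r} \<subseteq> {1..n} \<and> card {1..r} = r" by auto
    then show "{A. A \<subseteq> {1..n} \<and> card A = r} \<noteq> {}" by blast
  qed
  then show ?thesis unfolding Om_def by simp
qed

lemma lightbulb_eq: "lightbulb_switches n = pmf_of_set (Om n)"
proof -
  have "\<And>r. r \<in> {1..n} \<Longrightarrow> {A. A \<subseteq> {1..n} \<and> card A = r} \<noteq> {}"
  proof -
    fix r assume "r \<in> {1..n}"
    then have "{1..r} \<subseteq> {1..n} \<and> card {1..r} = r" by auto
    then show "{A. A \<subseteq> {1..n} \<and> card A = r} \<noteq> {}" by blast
  qed
  then show ?thesis unfolding lightbulb_switches_def Om_def
    by (intro Pi_pmf_of_set) auto
qed

lemma ic_invol: "interchange m i j (interchange m i j S) = S"
  by (auto simp: interchange_def fun_eq_iff)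

lemma ic_other: "r \<noteq> m \<Longrightarrow> interchange m i j S r = S r"
  by (simp add: interchange_def)

lemma Dset_card:
  assumes "S \<in> Om n" "even n" "i \<in> {1..n}"
  shows "card (Dset n i S) = n div 2" "finite (Dset n i S)" "Dset n i S \<subseteq> {1..n}"
proof -
  let ?m = "n div 2"
  have m: "?m \<in> {1..n}" using assms by auto
  have Sm: "S ?m \<subseteq> {1..n}" "card (S ?m) = ?m" using assms(1) m by (auto simp: Om_mem)
  show "finite (Dset n i S)" "Dset n i S \<subseteq> {1..n}" by (auto simp: Dset_def)
  show "card (Dset n i S) = n div 2"
  proof (cases "i \<in> S ?m")
    case True
    then have "Dset n i S = {1..n} - S ?m" using Sm by (auto simp: Dset_def)
    then show ?thesis using Sm assms(2) by (simp add: card_Diff_subset finite_subset, presburger)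
  next
    case False
    then have "Dset n i S = S ?m" using Sm by (auto simp: Dset_def)
    then show ?thesis using Sm by simp
  qed
qed

lemma ic_facts:
  assumes "S \<in> Om n" "even n" "i \<in> {1..n}" "j \<in> Dset n i S"
  shows "interchange (n div 2) i j S \<in> Om n"
    and "bulb_on n (interchange (n div 2) i j S) i \<longleftrightarrow> \<not> bulb_on n S i"
    and "j \<in> Dset n i (interchange (n div 2) i j S)"
proof -
  let ?m = "n div 2"
  let ?T = "interchange ?m i j S"
  have m: "?m \<in> {1..n}" using assms by auto
  have Sm: "S ?m \<subseteq> {1..n}" "card (S ?m) = ?m" using assms(1) m by (auto simp: Om_mem)
  have j: "j \<in> {1..n}" "(j \<in> S ?m) \<noteq> (i \<in> S ?m)" using assms(4) by (auto simp: Dset_def)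
  have ij: "i \<noteq> j" using j by auto
  have fin: "finite (S ?m)" using Sm finite_subset by blast
  have Tm: "?T ?m = {k. if k = i then j \<in> S ?m else if k = j then i \<in> S ?m else k \<in> S ?m}"
    by (simp add: interchange_def)
  have Tm_card: "?T ?m \<subseteq> {1..n} \<and> card (?T ?m) = ?m"
  proof (cases "i \<in> S ?m")
    case True
    then have "?T ?m = insert j (S ?m - {i})" using j ij unfolding Tm by auto
    then show ?thesis using True j Sm fin assms(3) by (auto simp: card_insert_if)
  next
    case False
    then have "?T ?m = insert i (S ?m - {j})" using j ij unfolding Tm by auto
    then show ?thesis using False j Sm fin assms(3) by (auto simp: card_insert_if)
  qed
  show "?T \<in> Om n"
    unfolding Om_mem
  proof (intro allI conjI impI)
    fix r assume "r \<in> {1..n}"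
    then show "?T r \<subseteq> {1..n}" "card (?T r) = r"
      using assms(1) Tm_card by (cases "r = ?m"; auto simp: Om_mem ic_other)+
  next
    fix r assume "r \<notin> {1..n}"
    then show "?T r = {}" using assms(1) m by (auto simp: Om_mem ic_other)
  qed
  show "j \<in> Dset n i ?T" using j ij by (auto simp: Dset_def interchange_def)
  let ?R = "{r \<in> {1..n}. i \<in> S r}"
  let ?R' = "{r \<in> {1..n}. i \<in> ?T r}"
  have finR: "finite ?R" by simp
  show "bulb_on n ?T i \<longleftrightarrow> \<not> bulb_on n S i"
  proof (cases "i \<in> S ?m")
    case True
    then have "i \<notin> ?T ?m" using j ij by (simp add: interchange_def)
    then have e: "?R' = ?R - {?m}" using m by (auto simp: ic_other) (metis ic_other)+
    have mem: "?m \<in> ?R" using True m by simp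
    have c1: "card ?R' = card ?R - 1" unfolding e using mem finR by (simp add: card_Diff_singleton)
    have c2: "card ?R > 0" using mem finR card_gt_0_iff by blast
    from c2 obtain k where k: "card ?R = Suc k" using gr0_implies_Suc by blast
    with c1 have k2: "card ?R' = k" by simp
    have "odd (card ?R') \<longleftrightarrow> \<not> odd (card ?R)" unfolding k k2 by simp
    then show ?thesis unfolding bulb_on_def .
  next
    case False
    then have "i \<in> ?T ?m" using j ij by (simp add: interchange_def)
    then have "?R' = insert ?m ?R" using m by (auto simp: ic_other) (metis ic_other)+
    moreover have "?m \<notin> ?R" using False m by simp
    ultimately have "card ?R' = Suc (card ?R)" by simp
    then show ?thesis unfolding bulb_on_def by simp
  qed
qed

lemma key_C:
  assumes "even n" "i \<in> {1..n}"
  shows "(\<Sum>S\<in>Om n - {S. bulb_on n S i}.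
            (if J \<in> Dset n i S \<and> interchange (n div 2) i J S = s then 1 else 0::real))
         = (if s \<in> Om n \<inter> {S. bulb_on n S i} \<and> J \<in> Dset n i s then 1 else 0)"
proof (cases "s \<in> Om n \<inter> {S. bulb_on n S i} \<and> J \<in> Dset n i s")
  case True
  let ?S0 = "interchange (n div 2) i J s"
  have s0: "?S0 \<in> Om n - {S. bulb_on n S i}" "J \<in> Dset n i ?S0"
    using ic_facts[of s n i J] True assms by auto
  have "(\<Sum>S\<in>Om n - {S. bulb_on n S i}.
            (if J \<in> Dset n i S \<and> interchange (n div 2) i J S = s then 1 else 0::real))
      = (\<Sum>S\<in>Om n - {S. bulb_on n S i}. (if S = ?S0 then 1 else 0))"
  proof (rule sum.cong[OF refl])
    fix S assume "S \<in> Om n - {S. bulb_on n S i}"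
    show "(if J \<in> Dset n i S \<and> interchange (n div 2) i J S = s then 1 else 0::real)
          = (if S = ?S0 then 1 else 0)"
      using s0 ic_invol[of "n div 2" i J S] ic_invol[of "n div 2" i J s] by auto
  qed
  also have "\<dots> = 1" using s0 finite_Om[of n] by (simp add: sum.delta')
  finally show ?thesis using True by simp
next
  case False
  have "\<And>S. S \<in> Om n - {S. bulb_on n S i} \<Longrightarrow>
      \<not> (J \<in> Dset n i S \<and> interchange (n div 2) i J S = s)"
  proof
    fix S assume S: "S \<in> Om n - {S. bulb_on n S i}" and h: "J \<in> Dset n i S \<and> interchange (n div 2) i J S = s"
    then show False using ic_facts[of S n i J] assms False by auto
  qed
  then have "(\<Sum>S\<in>Om n - {S. bulb_on n S i}.
            (if J \<in> Dset n i S \<and> interchange (n div 2) i J S = s then 1 else 0::real)) = 0"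
    by (intro sum.neutral) auto
  then show ?thesis using False by simp
qed

lemma key:
  assumes "even n" "i \<in> {1..n}"
  shows "(\<Sum>S\<in>Om n. pmf (switched_config n i S) s) = 2 * indicator (Om n \<inter> {S. bulb_on n S i}) s"
proof -
  let ?E = "{S. bulb_on n S i}"
  let ?m = "n div 2"
  let ?g = "\<lambda>S. pmf (switched_config n i S) s"
  have m0: "real ?m > 0" using assms by auto
  have split: "(\<Sum>S\<in>Om n. ?g S) = (\<Sum>S\<in>Om n \<inter> ?E. ?g S) + (\<Sum>S\<in>Om n - ?E. ?g S)"
    using finite_Om by (rule sum.Int_Diff)
  have A: "(\<Sum>S\<in>Om n \<inter> ?E. ?g S) = indicator (Om n \<inter> ?E) s"
  proof -
    have "(\<Sum>S\<in>Om n \<inter> ?E. ?g S) = (\<Sum>S\<in>Om n \<inter> ?E. if S = s then 1 else 0)"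
      by (intro sum.cong refl) (auto simp: switched_config_def indicator_def)
    also have "\<dots> = (if s \<in> Om n \<inter> ?E then 1 else 0)"
      using finite_Om[of n] by (simp add: sum.delta')
    also have "\<dots> = indicator (Om n \<inter> ?E) s" by (auto simp: indicator_def)
    finally show ?thesis .
  qed
  have B: "?g S = (\<Sum>J\<in>{1..n}. (if J \<in> Dset n i S \<and> interchange ?m i J S = s then 1 else 0)) / ?m"
    if S: "S \<in> Om n - ?E" for S
  proof -
    have D: "{j \<in> {1..n}. (j \<in> S (n div 2)) \<noteq> (i \<in> S (n div 2))} = Dset n i S"
      by (simp add: Dset_def)
    have dc: "card (Dset n i S) = ?m" "finite (Dset n i S)" "Dset n i S \<subseteq> {1..n}"
      using Dset_card[of S n i] S assms by auto
    have ne: "Dset n i S \<noteq> {}" using dc m0 by auto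
    have "?g S = (\<Sum>J\<in>Dset n i S. pmf (return_pmf (interchange ?m i J S)) s) / card (Dset n i S)"
      using S unfolding switched_config_def D by (simp add: pmf_bind_pmf_of_set[OF ne dc(2)])
    also have "(\<Sum>J\<in>Dset n i S. pmf (return_pmf (interchange ?m i J S)) s)
       = (\<Sum>J\<in>{1..n}. (if J \<in> Dset n i S \<and> interchange ?m i J S = s then 1 else 0))"
      using dc by (intro sum.mono_neutral_cong_left) (auto simp: indicator_def)
    finally show ?thesis using dc by simp
  qed
  have "(\<Sum>S\<in>Om n - ?E. ?g S) = (\<Sum>S\<in>Om n - ?E.
      (\<Sum>J\<in>{1..n}. (if J \<in> Dset n i S \<and> interchange ?m i J S = s then 1 else 0))) / ?m"
    using B by (simp add: sum_divide_distrib)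
  also have "(\<Sum>S\<in>Om n - ?E.
      (\<Sum>J\<in>{1..n}. (if J \<in> Dset n i S \<and> interchange ?m i J S = s then 1 else 0::real)))
    = (\<Sum>J\<in>{1..n}. (\<Sum>S\<in>Om n - ?E. (if J \<in> Dset n i S \<and> interchange ?m i J S = s then 1 else 0)))"
    by (rule sum.swap)
  also have "\<dots> = (\<Sum>J\<in>{1..n}. (if s \<in> Om n \<inter> ?E \<and> J \<in> Dset n i s then 1 else 0))"
    using key_C[OF assms] by simp
  also have "\<dots> = real ?m * indicator (Om n \<inter> ?E) s"
  proof (cases "s \<in> Om n \<inter> ?E")
    case True
    have dc: "card (Dset n i s) = ?m" "finite (Dset n i s)" "Dset n i s \<subseteq> {1..n}"
      using Dset_card[of s n i] True assms by auto
    have "(\<Sum>J\<in>{1..n}. (if s \<in> Om n \<inter> ?E \<and> J \<in> Dset n i s then 1 else 0::real))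
       = (\<Sum>J\<in>{1..n}. indicator (Dset n i s) J)"
      using True by (intro sum.cong refl) (auto simp: indicator_def)
    also have "\<dots> = (\<Sum>J\<in>Dset n i s. 1)"
      using dc by (intro sum.mono_neutral_cong_right) (auto simp: indicator_def)
    finally show ?thesis using True dc by simp
  qed (auto intro!: sum.neutral)
  finally have "(\<Sum>S\<in>Om n - ?E. ?g S) = indicator (Om n \<inter> ?E) s" using m0 by simp
  then show ?thesis using split A by simp
qed

lemma supp_sc:
  assumes "even n" "i \<in> {1..n}" "S \<in> Om n"
  shows "set_pmf (switched_config n i S) \<subseteq> Om n"
proof (cases "bulb_on n S i")
  case True
  then show ?thesis using assms by (simp add: switched_config_def)
next
  case False
  have D: "{j \<in> {1..n}. (j \<in> S (n div 2)) \<noteq> (i \<in> S (n div 2))} = Dset n i S"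
    by (simp add: Dset_def)
  have dc: "card (Dset n i S) = n div 2" "finite (Dset n i S)"
    using Dset_card[of S n i] assms by auto
  have ne: "Dset n i S \<noteq> {}" using dc assms by auto
  show ?thesis using False ne dc ic_facts(1)[of S n i] assms
    unfolding switched_config_def D by auto
qed

theorem lemma3p2:
  fixes n i :: nat
  assumes "even n" and "i \<in> {1..n}"
  shows "bind_pmf (lightbulb_switches n) (switched_config n i)
           = cond_pmf (lightbulb_switches n) {S. bulb_on n S i}"
proof -
  let ?E = "{S. bulb_on n S i}"
  let ?O = "Om n"
  let ?f = "switched_config n i"
  have fin: "finite ?O" by (rule finite_Om)
  have ne: "?O \<noteq> {}" by (rule Om_ne)
  have finE: "finite (?O \<inter> ?E)" using fin by simp
  have ind_sum: "(\<Sum>s\<in>?O. indicator (?O \<inter> ?E) s) = real (card (?O \<inter> ?E))"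
  proof -
    have "(\<Sum>s\<in>?O. indicator (?O \<inter> ?E) s) = (\<Sum>s\<in>?O \<inter> ?E. 1::real)"
      using fin by (intro sum.mono_neutral_cong_right) (auto simp: indicator_def)
    then show ?thesis by simp
  qed
  have "(\<Sum>s\<in>?O. \<Sum>S\<in>?O. pmf (?f S) s) = (\<Sum>S\<in>?O. \<Sum>s\<in>?O. pmf (?f S) s)"
    by (rule sum.swap)
  also have "\<dots> = (\<Sum>S\<in>?O. 1)"
    using supp_sc[OF assms] fin by (intro sum.cong refl sum_pmf_eq_1) auto
  finally have h1: "(\<Sum>s\<in>?O. 2 * indicator (?O \<inter> ?E) s) = real (card ?O)"
    using key[OF assms] by simp
  have h2: "(\<Sum>s\<in>?O. 2 * indicator (?O \<inter> ?E) s) = 2 * (\<Sum>s\<in>?O. indicator (?O \<inter> ?E) s :: real)"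
    by (rule sum_distrib_left[symmetric])
  have "real (card ?O) = 2 * real (card (?O \<inter> ?E))"
    using h1 h2 ind_sum by simp
  then have cardO: "real (card ?O) = 2 * real (card (?O \<inter> ?E))" .
  have c0: "real (card ?O) > 0" using fin ne by (simp add: card_gt_0_iff)
  then have cE: "real (card (?O \<inter> ?E)) > 0" using cardO by simp
  have neE: "set_pmf (lightbulb_switches n) \<inter> ?E \<noteq> {}"
    using cE fin ne by (auto simp: lightbulb_eq set_pmf_of_set)
  show ?thesis
  proof (rule pmf_eqI)
    fix s
    have L: "pmf (bind_pmf (lightbulb_switches n) ?f) s = 2 * indicator (?O \<inter> ?E) s / card ?O"
      unfolding lightbulb_eq using key[OF assms] by (simp add: pmf_bind_pmf_of_set[OF ne fin])
    have R: "pmf (cond_pmf (lightbulb_switches n) ?E) s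
        = (if s \<in> ?E then (indicator ?O s / card ?O) / (card (?O \<inter> ?E) / card ?O) else 0)"
      using fin ne by (subst pmf_cond[OF neE]) (simp add: lightbulb_eq measure_pmf_of_set)
    show "pmf (bind_pmf (lightbulb_switches n) ?f) s = pmf (cond_pmf (lightbulb_switches n) ?E) s"
      unfolding L R using cardO c0 cE by (auto simp: indicator_def field_simps)
  qed
qed

end
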